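(* Let $\lambda,a\in\mathbb{C}$ with $|\lambda|\ge 1$ and $f_{\lambda,a}(z)=\lambda\sin(z)+a$. Let $W_1,\dots,W_m$ be a cycle of periodic components of the Fatou set of $f_{\lambda,a}$ such that $\bigcup_{i=1}^m W_i$ is horizontally bounded. Then $W_i$ is bounded for every $i\in\{1,\dots,m\}$.
   Context: The Fatou set of an entire function is the set of points having a neighbourhood on which the iterates form a normal family. A cycle of periodic components means Fatou components with $f_{\lambda,a}(W_i)\subseteq W_{i+1}$ (indices mod $m$). A set is horizontally bounded if the real parts of its points form a bounded set. *)

theory Defs
  imports "HOL-Complex_Analysis.Complex_Analysis"
begin

text \<open>Normal family (in the sense of Montel, spherical metric): every sequence in the
family has a subsequence converging locally uniformly on U either to a function
or to infinity.\<close>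
definition normal_family_on :: "(nat \<Rightarrow> complex \<Rightarrow> complex) \<Rightarrow> complex set \<Rightarrow> bool" where
  "normal_family_on F U \<longleftrightarrow>
     (\<forall>s :: nat \<Rightarrow> nat. \<exists>r :: nat \<Rightarrow> nat. strict_mono r \<and>
        ((\<exists>g. \<forall>K. compact K \<and> K \<subseteq> U \<longrightarrow>
              uniform_limit K (\<lambda>k. F (s (r k))) g sequentially)
         \<or> (\<forall>K. compact K \<and> K \<subseteq> U \<longrightarrow>
              (\<forall>B. \<forall>\<^sub>F k in sequentially. \<forall>z\<in>K. norm (F (s (r k)) z) \<ge> B))))"

definition fatou_set :: "(complex \<Rightarrow> complex) \<Rightarrow> complex set" where
  "fatou_set f = {z. \<exists>U. open U \<and> z \<in> U \<and> normal_family_on (\<lambda>n. f ^^ n) U}"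

definition fatou_component :: "(complex \<Rightarrow> complex) \<Rightarrow> complex set \<Rightarrow> bool" where
  "fatou_component f W \<longleftrightarrow> (\<exists>z\<in>fatou_set f. W = connected_component_set (fatou_set f) z)"

definition horizontally_bounded :: "complex set \<Rightarrow> bool" where
  "horizontally_bounded S \<longleftrightarrow> bounded (Re ` S)"

definition f_sin :: "complex \<Rightarrow> complex \<Rightarrow> complex \<Rightarrow> complex" where
  "f_sin lam a z = lam * sin z + a"

end

theory Submission
  imports Defs
begin

lemma growth_real:
  fixes t C :: real
  assumes "C \<ge> 0" "t \<ge> 8 + 2*C"
  shows "(exp t - exp (-t))/2 \<ge> t + 4 + C"
proof -
  have e: "exp (t/2) \<ge> 1 + t/2" by (rule exp_ge_add_one_self)
  have "exp t = exp (t/2)^2" by (simp flip: exp_of_nat_mult)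
  also have "\<dots> \<ge> (1+t/2)^2" using e assms by (intro power_mono) auto
  finally have "exp t \<ge> (1+t/2)^2" .
  moreover have "exp (-t) \<le> 1" using assms by simp
  moreover have "t*t \<ge> 8*t" using assms by (intro mult_right_mono) auto
  ultimately have "exp t \<ge> 1 + t + t*t/4" "exp (-t) \<le> 1" "t*t \<ge> 8*t"
    by (auto simp: power2_eq_square algebra_simps)
  moreover have "\<And>x e q. 1 + t + q / 4 \<le> x \<Longrightarrow> e \<le> 1 \<Longrightarrow> 8 * t \<le> q \<Longrightarrow> t + 4 + C \<le> (x - e) / 2"
    using assms by (simp add: field_simps)
  ultimately show ?thesis by blast
qed

lemma norm_cos_lower: "norm (cos z) \<ge> \<bar>exp (Im z) - exp (- Im z)\<bar>/2"
proof -
  have "norm(cos z)^2 \<ge> ((exp(Im z) - inverse(exp(Im z))) / 2)^2"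
    by (simp add: norm_cos_squared power_divide)
  then have "norm(cos z) \<ge> \<bar>(exp(Im z) - inverse(exp(Im z))) / 2\<bar>"
    using abs_le_square_iff by (metis abs_norm_cancel)
  then show ?thesis by (simp add: exp_minus)
qed

lemma norm_sin_lower: "norm (sin z) \<ge> \<bar>exp (Im z) - exp (- Im z)\<bar>/2"
proof -
  have "sin z = cos (of_real (pi/2) - z)" by (simp add: cos_diff)
  moreover have "norm (cos (of_real (pi/2) - z)) \<ge> \<bar>exp (- Im z) - exp (Im z)\<bar>/2"
    using norm_cos_lower[of "of_real (pi/2) - z"] by simp
  ultimately show ?thesis by (simp add: abs_minus_commute)
qed

lemma sinh_abs: "\<bar>exp (y::real) - exp (- y)\<bar>/2 = (exp \<bar>y\<bar> - exp (- \<bar>y\<bar>))/2"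
  by (cases "y \<ge> 0") auto

lemma step_lemma:
  fixes lam a z :: complex and R :: real
  assumes "norm lam \<ge> 1" "R \<ge> 0" "\<bar>Im z\<bar> \<ge> 8 + 2*(norm a + R)"
    and "\<bar>Re (lam * sin z + a)\<bar> \<le> R"
  shows "\<bar>Im (lam * sin z + a)\<bar> \<ge> \<bar>Im z\<bar> + 1" "norm (lam * cos z) \<ge> 2"
proof -
  define t where "t = \<bar>Im z\<bar>"
  define s where "s = (exp t - exp (-t))/2"
  have s: "s \<ge> t + 4 + (norm a + R)" unfolding s_def
    by (rule growth_real) (use assms in \<open>auto simp: t_def\<close>)
  have ss: "norm (sin z) \<ge> s" "norm (cos z) \<ge> s"
    using norm_sin_lower[of z] norm_cos_lower[of z] sinh_abs[of "Im z"] by (auto simp: s_def t_def)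
  have "norm (lam * sin z) \<ge> s"
    using mult_right_mono[OF assms(1) norm_ge_zero, of "sin z"] ss by (simp add: norm_mult)
  then have "norm (lam * sin z + a) \<ge> s - norm a" using norm_triangle_ineq2[of "lam * sin z" "-a"] by simp
  moreover have "norm (lam * sin z + a) \<le> \<bar>Re (lam * sin z + a)\<bar> + \<bar>Im (lam * sin z + a)\<bar>"
    by (rule cmod_le)
  ultimately show "\<bar>Im (lam * sin z + a)\<bar> \<ge> \<bar>Im z\<bar> + 1" using assms(4) s by (simp add: t_def)
  have "norm (lam * cos z) \<ge> s"
    using mult_right_mono[OF assms(1) norm_ge_zero, of "cos z"] ss by (simp add: norm_mult)
  then show "norm (lam * cos z) \<ge> 2" using s assms(2) norm_ge_zero[of a] abs_ge_zero[of "Im z"] unfolding t_def by linarith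
qed

lemma cauchy_re:
  fixes g :: "complex \<Rightarrow> complex"
  assumes hol: "g holomorphic_on UNIV" and r: "r > 0" and bd: "\<And>w. w \<in> ball z r \<Longrightarrow> \<bar>Re (g w)\<bar> \<le> R"
  shows "norm (deriv g z) \<le> 2 * exp (2*R) / r"
proof -
  define h where "h = (\<lambda>w. exp (g w))"
  have holh: "h holomorphic_on UNIV" unfolding h_def using hol by (intro holomorphic_intros) auto
  have "norm ((deriv ^^ 1) h z) \<le> fact 1 * exp R / (r/2)^1"
  proof (rule Cauchy_inequality)
    show "h holomorphic_on ball z (r/2)" using holh by (rule holomorphic_on_subset) auto
    show "continuous_on (cball z (r/2)) h"
      using holh holomorphic_on_imp_continuous_on continuous_on_subset by blast
    show "0 < r/2" using r by simp
    fix x assume "norm (z - x) = r/2"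
    then have "x \<in> ball z r" using r by (simp add: dist_norm)
    then show "norm (h x) \<le> exp R" using bd[of x] by (simp add: h_def)
  qed
  then have A: "norm (deriv h z) \<le> 2 * exp R / r" by (simp add: mult.commute)
  have gd: "(g has_field_derivative deriv g z) (at z)"
    using hol holomorphic_derivI by blast
  have "(h has_field_derivative (exp (g z) * deriv g z)) (at z)"
    unfolding h_def using DERIV_chain2[OF DERIV_exp gd] by simp
  then have "deriv h z = exp (g z) * deriv g z" by (rule DERIV_imp_deriv)
  with A have B: "exp (Re (g z)) * norm (deriv g z) \<le> 2 * exp R / r" by (simp add: norm_mult)
  have "exp (Re (g z)) \<ge> exp (-R)" using bd[of z] r by simp
  then have "exp (-R) * norm (deriv g z) \<le> 2 * exp R / r"
    using B mult_right_mono[of "exp (-R)" "exp (Re (g z))" "norm (deriv g z)"] by simp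
  then have "norm (deriv g z) \<le> exp R * (2 * exp R / r)"
    by (simp add: exp_minus field_simps)
  also have "\<dots> = 2 * exp (2*R) / r" by (simp add: exp_double power2_eq_square)
  finally show ?thesis .
qed

lemma deriv_iter:
  fixes f f' :: "complex \<Rightarrow> complex"
  assumes "\<And>w. (f has_field_derivative f' w) (at w)"
  shows "((f ^^ n) has_field_derivative (\<Prod>k<n. f' ((f ^^ k) z))) (at z)"
proof (induction n)
  case 0 then show ?case by simp
next
  case (Suc n)
  have "((f \<circ> (f ^^ n)) has_field_derivative (f' ((f ^^ n) z) * (\<Prod>k<n. f' ((f ^^ k) z)))) (at z)"
    using DERIV_chain[OF assms Suc.IH] by simp
  then have "((\<lambda>x. f ((f ^^ n) x)) has_field_derivative (f' ((f ^^ n) z) * (\<Prod>k<n. f' ((f ^^ k) z)))) (at z)"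
    by (simp add: o_def)
  then show ?case by (simp add: mult.commute)
qed


theorem mainTheorem8:
  fixes lam a :: complex and m :: nat and W :: "nat \<Rightarrow> complex set"
  assumes "norm lam \<ge> 1"
    and "m \<ge> 1"
    and "\<And>i. i < m \<Longrightarrow> fatou_component (f_sin lam a) (W i)"
    and "\<And>i. i < m \<Longrightarrow> f_sin lam a ` W i \<subseteq> W (Suc i mod m)"
    and "horizontally_bounded (\<Union>i<m. W i)"
  shows "\<forall>i<m. bounded (W i)"
proof (rule ccontr)
  let ?f = "f_sin lam a"
  define S where "S = (\<Union>i<m. W i)"
  assume "\<not> (\<forall>i<m. bounded (W i))"
  then obtain i where i: "i < m" "\<not> bounded (W i)" by blast
  from assms(5) obtain R0 where R0: "\<forall>x\<in>S. norm (Re x) \<le> R0"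
    unfolding horizontally_bounded_def S_def bounded_iff by auto
  define R where "R = max R0 0"
  have Rre: "\<And>x. x \<in> S \<Longrightarrow> \<bar>Re x\<bar> \<le> R" using R0 by (force simp: R_def)
  have Rpos: "R \<ge> 0" by (simp add: R_def)
  define T where "T = 8 + 2*(norm a + R)"
  have orbit: "(?f ^^ n) z \<in> W ((j + n) mod m)" if "j < m" "z \<in> W j" for n j z
  proof (induction n)
    case 0 then show ?case using that by simp
  next
    case (Suc n)
    let ?k = "(j+n) mod m"
    have "?k < m" using assms(2) by simp
    then have "?f ((?f ^^ n) z) \<in> W (Suc ?k mod m)" using assms(4)[of ?k] Suc by blast
    moreover have "Suc ?k mod m = (j + Suc n) mod m" by (simp add: mod_Suc_eq)
    ultimately show ?case by simp
  qed
  have inS: "(?f ^^ n) z \<in> S" if "j < m" "z \<in> W j" for n j z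
  proof -
    have "(j + n) mod m < m" using assms(2) by simp
    then show ?thesis using orbit[OF that, of n] unfolding S_def by blast
  qed
  have WS: "W i \<subseteq> S" using i unfolding S_def by blast
  obtain z0 where "z0 \<in> fatou_set ?f" and Wi: "W i = connected_component_set (fatou_set ?f) z0"
    using assms(3)[OF i(1)] unfolding fatou_component_def by blast
  have "fatou_set ?f = \<Union>{U. open U \<and> normal_family_on (\<lambda>n. ?f ^^ n) U}"
    unfolding fatou_set_def by blast
  then have "open (fatou_set ?f)" by (auto intro: open_Union)
  then have opW: "open (W i)" unfolding Wi by (rule open_connected_component)
  from i(2) obtain z where z: "z \<in> W i" "norm z > R + T"
    unfolding bounded_iff by (meson not_le)
  have "norm z \<le> \<bar>Re z\<bar> + \<bar>Im z\<bar>" by (rule cmod_le)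
  moreover have "\<bar>Re z\<bar> \<le> R" using Rre WS z(1) by blast
  ultimately have zT: "\<bar>Im z\<bar> \<ge> T" using z(2) by linarith
  obtain r where r: "r > 0" "ball z r \<subseteq> W i" using opW z(1) open_contains_ball by blast
  define zs where "zs k = (?f ^^ k) z" for k
  have fz: "?f w = lam * sin w + a" for w by (simp add: f_sin_def)
  have big: "\<bar>Im (zs k)\<bar> \<ge> T \<and> norm (lam * cos (zs k)) \<ge> 2" for k
  proof (induction k)
    case 0
    have "norm (lam * cos z) \<ge> 2"
      using step_lemma(2)[OF assms(1) Rpos, where z=z] zT Rre[OF inS[OF i(1) z(1), of 1]]
      by (simp add: T_def fz)
    then show ?case using zT by (simp add: zs_def)
  next
    case (Suc k)
    have "zs (Suc k) \<in> S" unfolding zs_def using inS[OF i(1) z(1)] by blast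
    then have "lam * sin (zs k) + a \<in> S" by (simp add: zs_def fz)
    then have reR: "\<bar>Re (lam * sin (zs k) + a)\<bar> \<le> R" by (rule Rre)
    have "\<bar>Im (lam * sin (zs k) + a)\<bar> \<ge> \<bar>Im (zs k)\<bar> + 1"
      using step_lemma(1)[OF assms(1) Rpos, where z="zs k"] Suc reR by (simp add: T_def)
    then have T1: "\<bar>Im (zs (Suc k))\<bar> \<ge> T" using Suc by (simp add: zs_def fz)
    have "zs (Suc (Suc k)) \<in> S" unfolding zs_def using inS[OF i(1) z(1)] by blast
    then have "lam * sin (zs (Suc k)) + a \<in> S" by (simp add: zs_def fz)
    then have reR2: "\<bar>Re (lam * sin (zs (Suc k)) + a)\<bar> \<le> R" by (rule Rre)
    have "norm (lam * cos (zs (Suc k))) \<ge> 2"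
      using step_lemma(2)[OF assms(1) Rpos, where z="zs (Suc k)"] T1 reR2 by (simp add: T_def)
    with T1 show ?case by blast
  qed
  have fder: "(?f has_field_derivative (lam * cos w)) (at w)" for w
    unfolding f_sin_def by (auto intro!: derivative_eq_intros)
  define K where "K = 2 * exp (2*R) / r"
  have bound: "2 ^ n \<le> K" for n
  proof -
    have D: "((?f ^^ n) has_field_derivative (\<Prod>k<n. lam * cos ((?f ^^ k) w))) (at w)" for w
      by (rule deriv_iter[OF fder])
    have hol: "(?f ^^ n) holomorphic_on UNIV"
      using D by (auto simp: holomorphic_on_open)
    have "norm (deriv (?f ^^ n) z) \<le> K" unfolding K_def
    proof (rule cauchy_re[OF hol r(1)])
      fix w assume "w \<in> ball z r"
      then have "w \<in> W i" using r(2) by blast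
      then show "\<bar>Re ((?f ^^ n) w)\<bar> \<le> R" using Rre inS[OF i(1)] by blast
    qed
    moreover have "deriv (?f ^^ n) z = (\<Prod>k<n. lam * cos (zs k))"
      unfolding zs_def by (rule DERIV_imp_deriv[OF D])
    moreover have "norm (\<Prod>k<n. lam * cos (zs k)) = (\<Prod>k<n. norm (lam * cos (zs k)))"
      by (simp add: prod_norm)
    moreover have "(\<Prod>k<n. (2::real)) \<le> (\<Prod>k<n. norm (lam * cos (zs k)))"
      using big by (intro prod_mono) auto
    ultimately show ?thesis by simp
  qed
  obtain n where "K < 2 ^ n" using real_arch_pow[of 2 K] by auto
  with bound[of n] show False by simp
qed

end
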